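(* A tree $T$ is strong cop-win if and only if $T$ is a caterpillar.
   Context: A caterpillar is a tree such that removing all its leaves leaves a path (possibly empty or a single vertex). All graphs are finite and reflexive (a player may stay in place). The game of $k$ cops and $m$ robbers on $G$: in round 0 the cops first choose starting vertices, then the robbers choose theirs. In each round $i\geq 1$, all cops move (each to an adjacent vertex or staying), then all robbers move likewise. Several players may occupy the same vertex. Whenever a cop and some robbers occupy the same vertex, those robbers are captured and take no further part in the game. Both sides have full information. The cops win if all robbers are captured after finitely many rounds. For a cop-win graph $G$, $\mathrm{capt}(G,m)$ is the index of the round in which the last robber is captured when one cop plays to minimize this index and $m$ robbers play to maximize it. $G$ is strong cop-win if $\lim_{m\to\infty}\mathrm{capt}(G,m)$ exists (and is finite). *)

theory Defs
  imports Complex_Main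
begin

text \<open>A graph is given by a vertex set V and an adjacency relation E (only its
restriction to V matters). Moves are reflexive: a player may stay put.\<close>

definition is_simple_graph :: "'a set \<Rightarrow> ('a \<Rightarrow> 'a \<Rightarrow> bool) \<Rightarrow> bool" where
  "is_simple_graph V E \<longleftrightarrow> finite V \<and> (\<forall>u v. E u v \<longrightarrow> u \<in> V \<and> v \<in> V)
     \<and> (\<forall>u v. E u v \<longrightarrow> E v u) \<and> (\<forall>v. \<not> E v v)"

definition connected_graph :: "'a set \<Rightarrow> ('a \<Rightarrow> 'a \<Rightarrow> bool) \<Rightarrow> bool" where
  "connected_graph V E \<longleftrightarrow>
     (\<forall>u\<in>V. \<forall>v\<in>V. (\<lambda>x y. E x y \<and> x \<in> V \<and> y \<in> V)\<^sup>*\<^sup>* u v)"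

definition is_cycle :: "'a set \<Rightarrow> ('a \<Rightarrow> 'a \<Rightarrow> bool) \<Rightarrow> 'a list \<Rightarrow> bool" where
  "is_cycle V E xs \<longleftrightarrow> length xs \<ge> 3 \<and> distinct xs \<and> set xs \<subseteq> V
     \<and> (\<forall>i. Suc i < length xs \<longrightarrow> E (xs ! i) (xs ! Suc i))
     \<and> E (last xs) (hd xs)"

definition is_tree :: "'a set \<Rightarrow> ('a \<Rightarrow> 'a \<Rightarrow> bool) \<Rightarrow> bool" where
  "is_tree V E \<longleftrightarrow> is_simple_graph V E \<and> V \<noteq> {} \<and> connected_graph V E
     \<and> (\<nexists>xs. is_cycle V E xs)"

definition leaves :: "'a set \<Rightarrow> ('a \<Rightarrow> 'a \<Rightarrow> bool) \<Rightarrow> 'a set" where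
  "leaves V E = {v \<in> V. card {u \<in> V. E v u} = 1}"

definition induced_is_path :: "'a set \<Rightarrow> ('a \<Rightarrow> 'a \<Rightarrow> bool) \<Rightarrow> bool" where
  "induced_is_path W E \<longleftrightarrow> W = {} \<or>
     (\<exists>xs. distinct xs \<and> set xs = W \<and>
        (\<forall>u\<in>W. \<forall>v\<in>W. E u v \<longleftrightarrow>
           (\<exists>i. Suc i < length xs \<and> ((xs ! i = u \<and> xs ! Suc i = v) \<or> (xs ! i = v \<and> xs ! Suc i = u)))))"

definition caterpillar :: "'a set \<Rightarrow> ('a \<Rightarrow> 'a \<Rightarrow> bool) \<Rightarrow> bool" where
  "caterpillar V E \<longleftrightarrow> is_tree V E \<and> induced_is_path (V - leaves V E) E"

definition cnbhd :: "'a set \<Rightarrow> ('a \<Rightarrow> 'a \<Rightarrow> bool) \<Rightarrow> 'a \<Rightarrow> 'a set" where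
  "cnbhd V E v = {u \<in> V. u = v \<or> E v u}"

text \<open>Game of one cop against the robbers still in the game (list of their positions).
  cop_wins_within V E n c rs: it is the cop's turn, the cop is at c, the
  uncaptured robbers are at positions rs; the cop can guarantee that all robbers are
  captured within the next n rounds.\<close>
fun cop_wins_within :: "'a set \<Rightarrow> ('a \<Rightarrow> 'a \<Rightarrow> bool) \<Rightarrow> nat \<Rightarrow> 'a \<Rightarrow> 'a list \<Rightarrow> bool" where
  "cop_wins_within V E 0 c rs \<longleftrightarrow> rs = []"
| "cop_wins_within V E (Suc n) c rs \<longleftrightarrow> rs = [] \<or>
     (\<exists>c' \<in> cnbhd V E c.
        let rs1 = filter (\<lambda>r. r \<noteq> c') rs in
        rs1 = [] \<or>
        (\<forall>rs'. list_all2 (\<lambda>r r'. r' \<in> cnbhd V E r) rs1 rs' \<longrightarrow>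
            cop_wins_within V E n c' (filter (\<lambda>r. r \<noteq> c') rs')))"

text \<open>Round 0: cop places, then the m robbers place (those on the cop are captured).
  The cop can guarantee that the last robber is captured by round n.\<close>
definition cop_captures_by :: "'a set \<Rightarrow> ('a \<Rightarrow> 'a \<Rightarrow> bool) \<Rightarrow> nat \<Rightarrow> nat \<Rightarrow> bool" where
  "cop_captures_by V E m n \<longleftrightarrow>
     (\<exists>c0\<in>V. \<forall>rs0. length rs0 = m \<and> set rs0 \<subseteq> V \<longrightarrow>
        cop_wins_within V E n c0 (filter (\<lambda>r. r \<noteq> c0) rs0))"

definition cop_win :: "'a set \<Rightarrow> ('a \<Rightarrow> 'a \<Rightarrow> bool) \<Rightarrow> bool" where
  "cop_win V E \<longleftrightarrow> (\<exists>n. cop_captures_by V E 1 n)"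

text \<open>capt(G,m): value of the game (cop minimises, robbers maximise the capture round).\<close>
definition capt :: "'a set \<Rightarrow> ('a \<Rightarrow> 'a \<Rightarrow> bool) \<Rightarrow> nat \<Rightarrow> nat" where
  "capt V E m = (LEAST n. cop_captures_by V E m n)"

definition strong_cop_win :: "'a set \<Rightarrow> ('a \<Rightarrow> 'a \<Rightarrow> bool) \<Rightarrow> bool" where
  "strong_cop_win V E \<longleftrightarrow> cop_win V E \<and> (\<forall>m. \<exists>n. cop_captures_by V E m n)
     \<and> (\<exists>L::nat. (\<lambda>m. capt V E m) \<longlonglongrightarrow> L)"

end

theory Submission
  imports Defs
begin

definition Nb :: "'a set \<Rightarrow> ('a \<Rightarrow> 'a \<Rightarrow> bool) \<Rightarrow> 'a set \<Rightarrow> 'a set" where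
  "Nb V E X = {y. \<exists>x\<in>X. y \<in> cnbhd V E x}"

lemma Nb_mono: "X \<subseteq> Y \<Longrightarrow> Nb V E X \<subseteq> Nb V E Y"
  unfolding Nb_def by auto

inductive clean :: "'a set \<Rightarrow> ('a \<Rightarrow> 'a \<Rightarrow> bool) \<Rightarrow> nat \<Rightarrow> 'a \<Rightarrow> 'a set \<Rightarrow> bool"
  for V E where
  clean_empty: "clean V E n c {}"
| clean_step: "c' \<in> cnbhd V E c \<Longrightarrow> clean V E n c' (Nb V E (S - {c'}) - {c'}) \<Longrightarrow> clean V E (Suc n) c S"

lemma cww_nil: "cop_wins_within V E n c []" by (cases n) auto

lemma clean_wins: "clean V E n c S \<Longrightarrow> set rs \<subseteq> S \<Longrightarrow> cop_wins_within V E n c rs"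
proof (induction arbitrary: rs rule: clean.induct)
  case (clean_empty n c) then show ?case by (simp add: cww_nil)
next
  case (clean_step c' c n S)
  show ?case
  proof (cases "rs = []")
    case True then show ?thesis by (simp add: cww_nil)
  next
    case False
    have A: "\<forall>rs'. list_all2 (\<lambda>r r'. r' \<in> cnbhd V E r) (filter (\<lambda>r. r \<noteq> c') rs) rs' \<longrightarrow> cop_wins_within V E n c' (filter (\<lambda>r. r \<noteq> c') rs')"
    proof (intro allI impI)
      fix rs' assume la: "list_all2 (\<lambda>r r'. r' \<in> cnbhd V E r) (filter (\<lambda>r. r \<noteq> c') rs) rs'"
      have "set (filter (\<lambda>r. r \<noteq> c') rs') \<subseteq> Nb V E (S - {c'}) - {c'}"
      proof
        fix y assume y: "y \<in> set (filter (\<lambda>r. r \<noteq> c') rs')"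
        then have "y \<in> set rs'" "y \<noteq> c'" by auto
        then obtain i where i: "i < length rs'" "rs' ! i = y" by (auto simp: in_set_conv_nth)
        let ?f = "filter (\<lambda>r. r \<noteq> c') rs"
        from la i have "i < length ?f" "y \<in> cnbhd V E (?f ! i)" by (auto simp: list_all2_conv_all_nth)
        moreover have "?f ! i \<in> set ?f" using \<open>i < length ?f\<close> by (rule nth_mem)
        ultimately show "y \<in> Nb V E (S - {c'}) - {c'}" using clean_step.prems \<open>y \<noteq> c'\<close> unfolding Nb_def by auto
      qed
      then show "cop_wins_within V E n c' (filter (\<lambda>r. r \<noteq> c') rs')" by (rule clean_step.IH)
    qed
    show ?thesis using clean_step.hyps(1) A by (auto simp: Let_def)
  qed
qed

lemma clean_mono_set: "clean V E n c S \<Longrightarrow> S' \<subseteq> S \<Longrightarrow> clean V E n c S'"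
proof (induction arbitrary: S' rule: clean.induct)
  case (clean_empty n c) then show ?case by (simp add: clean.clean_empty)
next
  case (clean_step c' c n S)
  have "Nb V E (S' - {c'}) - {c'} \<subseteq> Nb V E (S - {c'}) - {c'}"
    using Nb_mono[of "S' - {c'}" "S - {c'}" V E] clean_step.prems by auto
  then show ?case using clean_step by (blast intro: clean.clean_step)
qed

lemma clean_mono_n: "clean V E n c S \<Longrightarrow> n \<le> m \<Longrightarrow> clean V E m c S"
proof (induction arbitrary: m rule: clean.induct)
  case (clean_empty n c) then show ?case by (simp add: clean.clean_empty)
next
  case (clean_step c' c n S)
  then obtain m' where "m = Suc m'" "n \<le> m'" by (cases m) auto
  then show ?case using clean_step by (blast intro: clean.clean_step)
qed

lemma clean_stepI: "c' \<in> cnbhd V E c \<Longrightarrow> Nb V E (S - {c'}) - {c'} \<subseteq> X \<Longrightarrow> clean V E n c' X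
  \<Longrightarrow> clean V E (Suc n) c S"
  by (blast intro: clean.clean_step clean_mono_set)

definition iswalk :: "'a set \<Rightarrow> ('a \<Rightarrow> 'a \<Rightarrow> bool) \<Rightarrow> 'a list \<Rightarrow> bool" where
  "iswalk V E u \<longleftrightarrow> set u \<subseteq> V \<and> successively (\<lambda>x y. y \<in> cnbhd V E x) u"

lemma iswalk_Cons: "iswalk V E (x # u) \<longleftrightarrow> x \<in> V \<and> iswalk V E u \<and> (u \<noteq> [] \<longrightarrow> hd u \<in> cnbhd V E x)"
  unfolding iswalk_def by (auto simp: successively_Cons)

lemma iswalk_replicate: "v \<in> V \<Longrightarrow> iswalk V E (replicate n v)"
  by (induction n) (auto simp: iswalk_Cons cnbhd_def, simp add: iswalk_def)

lemma robber_survives: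
  assumes inv_ne: "\<And>c S. Inv c S \<Longrightarrow> S \<noteq> {}"
  and inv_step: "\<And>c c' S. Inv c S \<Longrightarrow> c' \<in> cnbhd V E c \<Longrightarrow> Inv c' (Nb V E (S - {c'}) - {c'})"
  shows "Inv c S \<Longrightarrow> S \<subseteq> V \<Longrightarrow> (\<forall>u. iswalk V E u \<and> length u = Suc k \<and> hd u \<in> S \<longrightarrow> u \<in> set Ws)
    \<Longrightarrow> (\<forall>w\<in>set Ws. iswalk V E w \<and> length w = Suc k) \<Longrightarrow> \<not> cop_wins_within V E k c (map hd Ws)"
proof (induction k arbitrary: c S Ws)
  case 0
  from inv_ne[OF 0(1)] obtain v where "v \<in> S" by auto
  then have "[v] \<in> set Ws" using 0 by (auto simp: iswalk_def)
  then show ?case by auto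
next
  case (Suc k)
  show ?case
  proof
    assume cw: "cop_wins_within V E (Suc k) c (map hd Ws)"
    from inv_ne[OF Suc(2)] obtain v0 where "v0 \<in> S" by auto
    moreover have "iswalk V E (replicate (Suc (Suc k)) v0)" using \<open>v0 \<in> S\<close> Suc.prems(2) iswalk_replicate[of v0 V E "Suc (Suc k)"] by blast
    ultimately have "replicate (Suc (Suc k)) v0 \<in> set Ws" using Suc.prems(3) by (metis hd_replicate length_replicate nat.distinct(1))
    then have "map hd Ws \<noteq> []" by auto
    with cw obtain c' where c': "c' \<in> cnbhd V E c" and
      alt: "filter (\<lambda>r. r \<noteq> c') (map hd Ws) = [] \<or> (\<forall>rs'. list_all2 (\<lambda>r r'. r' \<in> cnbhd V E r) (filter (\<lambda>r. r \<noteq> c') (map hd Ws)) rs' \<longrightarrow>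
            cop_wins_within V E k c' (filter (\<lambda>r. r \<noteq> c') rs'))"
      by (auto simp: Let_def)
    define S' where "S' = Nb V E (S - {c'}) - {c'}"
    have invS': "Inv c' S'" unfolding S'_def by (rule inv_step[OF Suc(2) c'])
    then obtain v' where "v' \<in> S'" using inv_ne by blast
    then obtain v where v: "v \<in> S" "v \<noteq> c'" "v' \<in> cnbhd V E v" "v' \<noteq> c'" unfolding S'_def Nb_def by auto
    define Ws1 where "Ws1 = filter (\<lambda>w. hd w \<noteq> c') Ws"
    have rs1: "filter (\<lambda>r. r \<noteq> c') (map hd Ws) = map hd Ws1" unfolding Ws1_def by (simp add: filter_map o_def)
    have "v' \<in> V" using v(3) by (auto simp: cnbhd_def)
    then have "iswalk V E (v # replicate (Suc k) v')" using v Suc.prems(2)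
      by (auto simp: iswalk_Cons iswalk_replicate cnbhd_def)
    then have "v # replicate (Suc k) v' \<in> set Ws" using Suc.prems(3) v by auto
    then have "v # replicate (Suc k) v' \<in> set Ws1" using v unfolding Ws1_def by auto
    then have ne: "map hd Ws1 \<noteq> []" by auto
    define rs' where "rs' = map (\<lambda>w. hd (tl w)) Ws1"
    have W1: "\<forall>w\<in>set Ws1. iswalk V E w \<and> length w = Suc (Suc k)" using Suc.prems(4) unfolding Ws1_def by auto
    have la: "list_all2 (\<lambda>r r'. r' \<in> cnbhd V E r) (map hd Ws1) rs'"
      unfolding rs'_def list_all2_conv_all_nth
    proof (intro conjI allI impI)
      fix i assume "i < length (map hd Ws1)"
      then have "Ws1 ! i \<in> set Ws1" by simp
      with W1 have "iswalk V E (Ws1 ! i)" "length (Ws1 ! i) = Suc (Suc k)" by auto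
      then obtain x y r where "Ws1 ! i = x # y # r" "iswalk V E (x # y # r)"
        by (metis Suc_length_conv)
      then show "map (\<lambda>w. hd (tl w)) Ws1 ! i \<in> cnbhd V E (map hd Ws1 ! i)"
        using \<open>i < length (map hd Ws1)\<close> by (auto simp: iswalk_Cons)
    qed simp
    define Ws2 where "Ws2 = filter (\<lambda>w. hd w \<noteq> c') (map tl Ws1)"
    have rs2: "filter (\<lambda>r. r \<noteq> c') rs' = map hd Ws2" unfolding rs'_def Ws2_def by (simp add: filter_map o_def)
    have "cop_wins_within V E k c' (map hd Ws2)" using alt rs1 ne la rs2 by metis
    moreover have "\<not> cop_wins_within V E k c' (map hd Ws2)"
    proof (rule Suc.IH[OF invS'])
      show "S' \<subseteq> V" unfolding S'_def Nb_def cnbhd_def by auto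
      show "\<forall>u. iswalk V E u \<and> length u = Suc k \<and> hd u \<in> S' \<longrightarrow> u \<in> set Ws2"
      proof (intro allI impI)
        fix u assume u: "iswalk V E u \<and> length u = Suc k \<and> hd u \<in> S'"
        then obtain x where x: "x \<in> S" "x \<noteq> c'" "hd u \<in> cnbhd V E x" "hd u \<noteq> c'" unfolding S'_def Nb_def by auto
        have "u \<noteq> []" using u by auto
        then have "iswalk V E (x # u)" using u x Suc.prems(2) by (auto simp: iswalk_Cons)
        then have "x # u \<in> set Ws" using Suc.prems(3) x u by auto
        then have "x # u \<in> set Ws1" using x unfolding Ws1_def by auto
        then have "u \<in> set (map tl Ws1)" by force
        then show "u \<in> set Ws2" using x unfolding Ws2_def by auto
      qed
      show "\<forall>w\<in>set Ws2. iswalk V E w \<and> length w = Suc k"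
      proof
        fix w assume "w \<in> set Ws2"
        then obtain w0 where "w0 \<in> set Ws1" "w = tl w0" unfolding Ws2_def by auto
        with W1 obtain x where "w0 = x # w" "iswalk V E w0" "length w0 = Suc (Suc k)"
          by (metis list.collapse list.size(3) nat.distinct(1))
        then show "iswalk V E w \<and> length w = Suc k" by (auto simp: iswalk_Cons)
      qed
    qed
    ultimately show False by contradiction
  qed
qed

lemma robbers_win_captures:
  assumes inv_ne: "\<And>c S. Inv c S \<Longrightarrow> S \<noteq> {}"
  and inv_step: "\<And>c c' S. Inv c S \<Longrightarrow> c' \<in> cnbhd V E c \<Longrightarrow> Inv c' (Nb V E (S - {c'}) - {c'})"
  and init: "\<And>c0. c0 \<in> V \<Longrightarrow> Inv c0 (V - {c0})"
  and fin: "finite V"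
  shows "\<exists>M. \<forall>m\<ge>M. \<not> cop_captures_by V E m N"
proof -
  have "finite {u. iswalk V E u \<and> length u = Suc N}"
    by (rule finite_subset[OF _ finite_lists_length_eq[OF fin, of "Suc N"]]) (auto simp: iswalk_def)
  then obtain AW where AW: "set AW = {u. iswalk V E u \<and> length u = Suc N}" using finite_list by blast
  show ?thesis
  proof (intro exI allI impI)
    fix m assume m: "length AW \<le> m"
    show "\<not> cop_captures_by V E m N"
      unfolding cop_captures_by_def
    proof
      assume "\<exists>c0\<in>V. \<forall>rs0. length rs0 = m \<and> set rs0 \<subseteq> V \<longrightarrow> cop_wins_within V E N c0 (filter (\<lambda>r. r \<noteq> c0) rs0)"
      then obtain c0 where c0: "c0 \<in> V" and H: "\<forall>rs0. length rs0 = m \<and> set rs0 \<subseteq> V \<longrightarrow> cop_wins_within V E N c0 (filter (\<lambda>r. r \<noteq> c0) rs0)" by blast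
      define rs0 where "rs0 = map hd AW @ replicate (m - length AW) c0"
      have "length rs0 = m" using m unfolding rs0_def by simp
      moreover have "set rs0 \<subseteq> V"
      proof -
        have "hd u \<in> V" if "u \<in> set AW" for u
        proof -
          have "u \<in> {u. iswalk V E u \<and> length u = Suc N}" using that AW by simp
          then show ?thesis by (cases u) (auto simp: iswalk_def)
        qed
        then show ?thesis using c0 unfolding rs0_def by auto
      qed
      ultimately have cw: "cop_wins_within V E N c0 (filter (\<lambda>r. r \<noteq> c0) rs0)" using H by blast
      have eq: "filter (\<lambda>r. r \<noteq> c0) rs0 = map hd (filter (\<lambda>w. hd w \<noteq> c0) AW)"
        unfolding rs0_def by (simp add: filter_map o_def)
      have "\<not> cop_wins_within V E N c0 (map hd (filter (\<lambda>w. hd w \<noteq> c0) AW))"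
        by (rule robber_survives[of Inv V E, OF inv_ne inv_step init[OF c0]]) (auto simp: AW)
      then show False using cw eq by simp
    qed
  qed
qed


lemma tree_simple:
  assumes "is_tree V E"
  shows "finite V" "\<And>u v. E u v \<Longrightarrow> u \<in> V" "\<And>u v. E u v \<Longrightarrow> v \<in> V"
    "\<And>u v. E u v \<Longrightarrow> E v u" "\<And>v. \<not> E v v" "connected_graph V E" "V \<noteq> {}"
    "\<And>xs. \<not> is_cycle V E xs"
  using assms unfolding is_tree_def is_simple_graph_def by blast+

lemma conn_closed:
  assumes "connected_graph V E" "u \<in> V" "u \<in> Y"
    and cl: "\<And>x y. x \<in> Y \<Longrightarrow> x \<in> V \<Longrightarrow> y \<in> V \<Longrightarrow> E x y \<Longrightarrow> y \<in> Y"
  shows "V \<subseteq> Y"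
proof
  fix v assume "v \<in> V"
  then have "(\<lambda>x y. E x y \<and> x \<in> V \<and> y \<in> V)\<^sup>*\<^sup>* u v" using assms(1,2) unfolding connected_graph_def by blast
  then show "v \<in> Y"
  proof (induction rule: rtranclp_induct)
    case base show ?case using assms(3) .
  next
    case (step y z) then show ?case using cl by blast
  qed
qed

lemma leaf_unique:
  assumes "v \<in> leaves V E" "E v u" "E v u'" "u \<in> V" "u' \<in> V"
  shows "u = u'"
proof -
  have "card {w \<in> V. E v w} = 1" using assms(1) unfolding leaves_def by auto
  then obtain z where "{w \<in> V. E v w} = {z}" by (rule card_1_singletonE)
  moreover have "u \<in> {w \<in> V. E v w}" "u' \<in> {w \<in> V. E v w}" using assms by auto
  ultimately show ?thesis by auto
qed

lemma leaf_has_nb: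
  assumes "v \<in> leaves V E"
  shows "\<exists>u\<in>V. E v u"
proof -
  have "card {w \<in> V. E v w} = 1" using assms(1) unfolding leaves_def by auto
  then obtain z where "{w \<in> V. E v w} = {z}" by (rule card_1_singletonE)
  then show ?thesis by blast
qed

lemma nonleaf_other:
  assumes "a \<in> V" "a \<notin> leaves V E" "E a c" "c \<in> V"
  shows "\<exists>b. E a b \<and> b \<noteq> c"
proof (rule ccontr)
  assume "\<not> ?thesis"
  then have "\<forall>b. E a b \<longrightarrow> b = c" by blast
  then have "{w \<in> V. E a w} = {c}" using assms(3,4) by blast
  then have "a \<in> leaves V E" using assms(1) unfolding leaves_def by simp
  then show False using assms by simp
qed

lemma two_leaves:
  assumes T: "is_tree V E" and "v \<in> leaves V E" "u \<in> leaves V E" "E v u"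
  shows "V \<subseteq> {u, v}"
proof (rule conn_closed[OF tree_simple(6)[OF T], of v])
  show "v \<in> V" using assms(2) unfolding leaves_def by auto
  show "v \<in> {u, v}" by simp
  fix x y assume "x \<in> {u, v}" "x \<in> V" "y \<in> V" "E x y"
  then show "y \<in> {u, v}"
  proof (cases "x = u")
    case True
    then have "E u y" "E u v" using \<open>E x y\<close> tree_simple(4)[OF T] assms(4) by auto
    then show ?thesis using leaf_unique[OF assms(3)] \<open>y \<in> V\<close> \<open>v \<in> V\<close> by blast
  next
    case False
    then have "E v y" using \<open>E x y\<close> \<open>x \<in> {u, v}\<close> by auto
    moreover have "u \<in> V" using tree_simple(3)[OF T assms(4)] .
    ultimately show ?thesis using leaf_unique[OF assms(2)] \<open>y \<in> V\<close> assms(4) by blast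
  qed
qed

definition RR :: "('a \<Rightarrow> 'a \<Rightarrow> bool) \<Rightarrow> 'a \<Rightarrow> 'a \<Rightarrow> bool" where
  "RR E x y \<longleftrightarrow> x = y \<or> E x y"

lemma shorten:
  "successively (RR E) xs \<Longrightarrow> xs \<noteq> [] \<Longrightarrow> \<exists>ys. ys \<noteq> [] \<and> distinct ys \<and> successively (RR E) ys
     \<and> hd ys = hd xs \<and> last ys = last xs \<and> set ys \<subseteq> set xs"
proof (induction "length xs" arbitrary: xs rule: less_induct)
  case less
  show ?case
  proof (cases "distinct xs")
    case True then show ?thesis using less.prems by (intro exI[of _ xs]) auto
  next
    case False
    then obtain p q r y where xs: "xs = p @ [y] @ q @ [y] @ r" using not_distinct_decomp by blast
    define xs' where "xs' = p @ [y] @ r"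
    have "length xs' < length xs" unfolding xs xs'_def by simp
    have sx': "successively (RR E) xs'"
    proof -
      have A: "successively (RR E) (p @ (y # q @ y # r))" using less.prems(1) xs by simp
      from A[unfolded successively_append_iff] have s1: "successively (RR E) p"
        and s2: "successively (RR E) (y # q @ y # r)" and s3: "p = [] \<or> RR E (last p) y" by auto
      from s2 have "successively (RR E) ((y # q) @ (y # r))" by simp
      then have s4: "successively (RR E) (y # r)" unfolding successively_append_iff by blast
      show ?thesis unfolding xs'_def using s1 s3 s4 by (auto simp: successively_append_iff)
    qed
    have "xs' \<noteq> []" unfolding xs'_def by simp
    from less.hyps[OF \<open>length xs' < length xs\<close> sx' this] obtain ys where ys: "ys \<noteq> [] \<and> distinct ys \<and> successively (RR E) ys
       \<and> hd ys = hd xs' \<and> last ys = last xs' \<and> set ys \<subseteq> set xs'"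
      by (elim exE)
    have "hd xs' = hd xs" unfolding xs xs'_def by (cases p) auto
    moreover have "last xs' = last xs" unfolding xs xs'_def by (cases r) auto
    moreover have "set xs' \<subseteq> set xs" unfolding xs xs'_def by auto
    ultimately show ?thesis using ys by (intro exI[of _ ys]) auto
  qed
qed

lemma no_detour:
  assumes T: "is_tree V E" and "E c u" "E c v" "u \<noteq> v" "xs \<noteq> []" "hd xs = u" "last xs = v"
    "successively (RR E) xs" "set xs \<subseteq> V - {c}"
  shows False
proof -
  obtain ys where ys: "ys \<noteq> []" "distinct ys" "successively (RR E) ys"
     "hd ys = u" "last ys = v" "set ys \<subseteq> V - {c}"
    using shorten[OF assms(8,5)] assms(6,7,9) by blast
  have "length ys \<noteq> 1"
  proof
    assume "length ys = 1"
    then obtain z where "ys = [z]" by (metis One_nat_def length_0_conv length_Suc_conv)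
    then show False using ys assms(4) by simp
  qed
  moreover have "length ys > 0" using ys(1) by simp
  ultimately have len: "length ys \<ge> 2" by linarith
  have cV: "c \<in> V" using tree_simple(2)[OF T assms(2)] .
  have "is_cycle V E (c # ys)"
    unfolding is_cycle_def
  proof (intro conjI allI impI)
    show "3 \<le> length (c # ys)" using len by simp
    show "distinct (c # ys)" using ys by auto
    show "set (c # ys) \<subseteq> V" using ys cV by auto
    fix i assume i: "Suc i < length (c # ys)"
    show "E ((c # ys) ! i) ((c # ys) ! Suc i)"
    proof (cases i)
      case 0
      then show ?thesis using ys(1,4) assms(2) by (cases ys) auto
    next
      case (Suc j)
      then have j: "Suc j < length ys" using i by simp
      have "RR E (ys ! j) (ys ! Suc j)" using successively_nth[OF ys(3) j] .
      moreover have "ys ! j \<noteq> ys ! Suc j" using ys(2) j by (simp add: nth_eq_iff_index_eq)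
      ultimately show ?thesis using Suc by (simp add: RR_def)
    qed
  next
    show "E (last (c # ys)) (hd (c # ys))" using ys(1,5) assms(3) tree_simple(4)[OF T] by simp
  qed
  then show False using tree_simple(8)[OF T] by blast
qed

lemma cycle_free_path:
  assumes T: "is_tree V E" and d: "distinct xs" "set xs \<subseteq> V" "successively E xs"
    and ij: "i < j" "j < length xs" "E (xs ! i) (xs ! j)"
  shows "j = Suc i"
proof (rule ccontr)
  assume "j \<noteq> Suc i"
  then have ji: "j \<ge> i + 2" using ij by simp
  define zs where "zs = take (j - i + 1) (drop i xs)"
  have lz: "length zs = j - i + 1" unfolding zs_def using ij by simp
  have nz: "\<And>k. k \<le> j - i \<Longrightarrow> zs ! k = xs ! (i + k)" unfolding zs_def using ij by simp
  have "is_cycle V E zs"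
    unfolding is_cycle_def
  proof (intro conjI allI impI)
    show "3 \<le> length zs" using lz ji by simp
    show "distinct zs" unfolding zs_def using d(1) by simp
    show "set zs \<subseteq> V" unfolding zs_def using d(2) set_take_subset set_drop_subset by fastforce
    fix k assume k: "Suc k < length zs"
    have "E (xs ! (i + k)) (xs ! Suc (i + k))" using successively_nth[OF d(3)] k lz ij by simp
    then show "E (zs ! k) (zs ! Suc k)" using nz[of k] nz[of "Suc k"] k lz by simp
  next
    have "zs \<noteq> []" using lz by auto
    then have "last zs = xs ! j" using nz[of "j - i"] lz ij by (simp add: last_conv_nth)
    moreover have "hd zs = xs ! i" using nz[of 0] lz \<open>zs \<noteq> []\<close> by (simp add: hd_conv_nth)
    ultimately show "E (last zs) (hd zs)" using ij(3) tree_simple(4)[OF T] by simp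
  qed
  then show False using tree_simple(8)[OF T] by blast
qed


lemma deg3:
  assumes T: "is_tree V E" and np: "\<not> induced_is_path (V - leaves V E) E"
  shows "\<exists>c a0 a1 a2. c \<in> V - leaves V E \<and> a0 \<in> V - leaves V E \<and> a1 \<in> V - leaves V E
     \<and> a2 \<in> V - leaves V E \<and> a0 \<noteq> a1 \<and> a0 \<noteq> a2 \<and> a1 \<noteq> a2 \<and> E c a0 \<and> E c a1 \<and> E c a2"
proof (rule ccontr)
  assume H: "\<not> ?thesis"
  define W where "W = V - leaves V E"
  have sym: "\<And>u v. E u v \<Longrightarrow> E v u" using tree_simple(4)[OF T] .
  have "W \<noteq> {}" using np unfolding W_def induced_is_path_def by auto
  then obtain w0 where w0: "w0 \<in> W" by auto
  define P where "P xs \<longleftrightarrow> xs \<noteq> [] \<and> distinct xs \<and> set xs \<subseteq> W \<and> successively E xs" for xs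
  have finW: "finite W" unfolding W_def using tree_simple(1)[OF T] by simp
  have bound: "length xs \<le> card W" if "P xs" for xs
  proof -
    have "card (set xs) = length xs" using that unfolding P_def by (simp add: distinct_card)
    moreover have "card (set xs) \<le> card W" using that finW unfolding P_def by (simp add: card_mono)
    ultimately show ?thesis by simp
  qed
  have "P [w0]" unfolding P_def using w0 by simp
  moreover have "\<forall>y. P y \<longrightarrow> length y < Suc (card W)" using bound by (simp add: less_Suc_eq_le)
  ultimately obtain xs where Pxs: "P xs" and maxl0: "\<forall>ys. P ys \<longrightarrow> length ys \<le> length xs"
    using ex_has_greatest_nat[of P "[w0]" length "Suc (card W)"] by blast
  have maxl: "\<And>ys. P ys \<Longrightarrow> length ys \<le> length xs" using maxl0 by blast
  have xsne: "xs \<noteq> []" and dxs: "distinct xs" and sxs: "set xs \<subseteq> W" and exs: "successively E xs"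
    using Pxs unfolding P_def by auto
  have setW: "set xs = W"
  proof (rule ccontr)
    assume "set xs \<noteq> W"
    then obtain w where w: "w \<in> W" "w \<notin> set xs" using sxs by auto
    define Y where "Y = set xs \<union> {l \<in> leaves V E. \<exists>x\<in>set xs. E l x}"
    have "\<not> V \<subseteq> Y" using w unfolding Y_def W_def by auto
    moreover have "hd xs \<in> set xs" using xsne by simp
    then have "hd xs \<in> V" "hd xs \<in> Y" using sxs unfolding W_def Y_def by auto
    ultimately obtain x y where xy: "x \<in> Y" "x \<in> V" "y \<in> V" "E x y" "y \<notin> Y"
      using conn_closed[OF tree_simple(6)[OF T], of "hd xs" Y] by blast
    have xin: "x \<in> set xs"
    proof (rule ccontr)
      assume "x \<notin> set xs"
      then obtain x0 where "x \<in> leaves V E" "x0 \<in> set xs" "E x x0" using xy(1) unfolding Y_def by auto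
      moreover have "x0 \<in> V" using \<open>x0 \<in> set xs\<close> sxs unfolding W_def by auto
      ultimately have "y = x0" using leaf_unique[of x V E y x0] xy by blast
      then show False using \<open>x0 \<in> set xs\<close> xy(5) unfolding Y_def by auto
    qed
    have yW: "y \<in> W"
    proof -
      have "y \<notin> leaves V E" using xy(5) xin sym[OF xy(4)] unfolding Y_def by auto
      then show ?thesis using xy(3) unfolding W_def by auto
    qed
    have ynot: "y \<notin> set xs" using xy(5) unfolding Y_def by auto
    obtain i where i: "i < length xs" "xs ! i = x" using xin by (auto simp: in_set_conv_nth)
    show False
    proof (cases "i = 0")
      case True
      have "hd xs = x" using i True xsne by (simp add: hd_conv_nth)
      then have "P (y # xs)" using Pxs yW ynot sym[OF xy(4)] unfolding P_def by (auto simp: successively_Cons)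
      then show False using maxl[of "y # xs"] by simp
    next
      case False
      show False
      proof (cases "i = length xs - 1")
        case True
        have "last xs = x" using i True xsne by (simp add: last_conv_nth)
        then have "P (xs @ [y])" using Pxs yW ynot xy(4) unfolding P_def by (auto simp: successively_append_iff)
        then show False using maxl[of "xs @ [y]"] by simp
      next
        case False2: False
        have i1: "Suc (i - 1) = i" using False by simp
        have i2: "Suc i < length xs" using False2 i by simp
        have e0: "E (xs ! (i - 1)) x" using successively_nth[OF exs, of "i - 1"] i1 i by simp
        have e1: "E x (xs ! Suc i)" using successively_nth[OF exs i2] i by simp
        have d01: "xs ! (i - 1) \<noteq> xs ! Suc i" using dxs i2 by (simp add: nth_eq_iff_index_eq)
        have inW: "xs ! (i - 1) \<in> W" "xs ! Suc i \<in> W" "x \<in> W"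
          using sxs i i2 xin by auto
        have yn: "y \<noteq> xs ! (i - 1)" "y \<noteq> xs ! Suc i" using ynot i i2 by auto
        show False
          apply (rule notE[OF H])
          apply (rule exI[of _ x], rule exI[of _ "xs ! (i - 1)"], rule exI[of _ "xs ! Suc i"], rule exI[of _ y])
          using d01 inW yn yW e1 sym[OF e0] xy(4) unfolding W_def by simp
      qed
    qed
  qed
  have "induced_is_path W E"
    unfolding induced_is_path_def
  proof (rule disjI2, rule exI[of _ xs], intro conjI ballI)
    show "distinct xs" by (rule dxs)
    show "set xs = W" by (rule setW)
    fix u v assume "u \<in> W" "v \<in> W"
    then obtain i j where ij: "i < length xs" "xs ! i = u" "j < length xs" "xs ! j = v"
      using setW by (auto simp: in_set_conv_nth)
    show "E u v \<longleftrightarrow> (\<exists>i. Suc i < length xs \<and> (xs ! i = u \<and> xs ! Suc i = v \<or> xs ! i = v \<and> xs ! Suc i = u))"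
    proof
      assume e: "E u v"
      have "i \<noteq> j" using e ij tree_simple(5)[OF T] by auto
      show "\<exists>i. Suc i < length xs \<and> (xs ! i = u \<and> xs ! Suc i = v \<or> xs ! i = v \<and> xs ! Suc i = u)"
      proof (cases "i < j")
        case True
        have "j = Suc i" using cycle_free_path[OF T dxs _ exs True ij(3)] sxs e ij unfolding W_def by auto
        then show ?thesis using ij by auto
      next
        case False
        then have "j < i" using \<open>i \<noteq> j\<close> by simp
        have "i = Suc j" using cycle_free_path[OF T dxs _ exs \<open>j < i\<close> ij(1)] sxs sym[OF e] ij unfolding W_def by auto
        then show ?thesis using ij by auto
      qed
    next
      assume "\<exists>i. Suc i < length xs \<and> (xs ! i = u \<and> xs ! Suc i = v \<or> xs ! i = v \<and> xs ! Suc i = u)"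
      then obtain k where "Suc k < length xs" "xs ! k = u \<and> xs ! Suc k = v \<or> xs ! k = v \<and> xs ! Suc k = u" by blast
      then show "E u v" using successively_nth[OF exs] sym by blast
    qed
  qed
  then show False using np unfolding W_def by simp
qed


lemma RR_sym: "(\<And>u v. E u v \<Longrightarrow> E v u) \<Longrightarrow> (\<lambda>x y. RR E y x) = RR E"
  unfolding RR_def by (auto simp: fun_eq_iff)

lemma Nb_keep: "s \<in> S \<Longrightarrow> s \<noteq> y \<Longrightarrow> s \<in> V \<Longrightarrow> s \<in> Nb V E (S - {y}) - {y}"
  unfolding Nb_def cnbhd_def by auto

lemma Nb_nb: "s \<in> S \<Longrightarrow> s \<noteq> y \<Longrightarrow> E s t \<Longrightarrow> t \<in> V \<Longrightarrow> t \<noteq> y \<Longrightarrow> t \<in> Nb V E (S - {y}) - {y}"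
  unfolding Nb_def cnbhd_def by auto

lemma two_others: "(i::nat) < 3 \<Longrightarrow> \<exists>j k. j < 3 \<and> k < 3 \<and> j \<noteq> k \<and> j \<noteq> i \<and> k \<noteq> i"
proof -
  assume "i < 3"
  then consider "i = 0" | "i = 1" | "i = 2" by linarith
  then show ?thesis
  proof cases
    case 1 then show ?thesis by (intro exI[of _ 1] exI[of _ 2]) simp
  next
    case 2 then show ?thesis by (intro exI[of _ 0] exI[of _ 2]) simp
  next
    case 3 then show ?thesis by (intro exI[of _ 0] exI[of _ 1]) simp
  qed
qed

lemma third_idx: "(i::nat) < 3 \<Longrightarrow> j < 3 \<Longrightarrow> m < 3 \<Longrightarrow> i \<noteq> j \<Longrightarrow> m \<noteq> i \<Longrightarrow> m \<noteq> j \<Longrightarrow> k < 3 \<Longrightarrow> k \<noteq> m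
  \<Longrightarrow> k = i \<or> k = j"
  by linarith

locale spider =
  fixes V :: "'a set" and E :: "'a \<Rightarrow> 'a \<Rightarrow> bool" and c :: 'a and a b :: "nat \<Rightarrow> 'a"
  assumes T: "is_tree V E"
  and ca: "\<And>i. i < 3 \<Longrightarrow> E c (a i)"
  and ainj: "\<And>i j. i < 3 \<Longrightarrow> j < 3 \<Longrightarrow> a i = a j \<Longrightarrow> i = j"
  and ab: "\<And>i. i < 3 \<Longrightarrow> E (a i) (b i)"
  and bc: "\<And>i. i < 3 \<Longrightarrow> b i \<noteq> c"
begin

lemma sym: "E u v \<Longrightarrow> E v u" using tree_simple(4)[OF T] .
lemma inV1: "E u v \<Longrightarrow> u \<in> V" using tree_simple(2)[OF T] .
lemma inV2: "E u v \<Longrightarrow> v \<in> V" using tree_simple(3)[OF T] .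
lemma irr: "\<not> E v v" using tree_simple(5)[OF T] .

lemma aV: "i < 3 \<Longrightarrow> a i \<in> V" using inV2[OF ca] .
lemma bV: "i < 3 \<Longrightarrow> b i \<in> V" using inV2[OF ab] .
lemma cV: "c \<in> V" using inV1[OF ca[of 0]] by simp
lemma a_ne_c: "i < 3 \<Longrightarrow> a i \<noteq> c" using ca irr by metis
lemma a_ne_b: "i < 3 \<Longrightarrow> a i \<noteq> b i" using ab irr by metis

definition K :: "nat \<Rightarrow> 'a set" where
  "K i = {x. \<exists>xs. xs \<noteq> [] \<and> hd xs = a i \<and> last xs = x \<and> successively (RR E) xs \<and> set xs \<subseteq> V - {c}}"

lemma aK: "i < 3 \<Longrightarrow> a i \<in> K i"
  unfolding K_def using aV a_ne_c by (intro CollectI exI[of _ "[a i]"]) auto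

lemma bK: "i < 3 \<Longrightarrow> b i \<in> K i"
  unfolding K_def using aV a_ne_c bV bc ab by (intro CollectI exI[of _ "[a i, b i]"]) (auto simp: RR_def)

lemma K_closed: "x \<in> K i \<Longrightarrow> E x y \<Longrightarrow> y \<noteq> c \<Longrightarrow> y \<in> K i"
proof -
  assume "x \<in> K i" "E x y" "y \<noteq> c"
  then obtain xs where xs: "xs \<noteq> []" "hd xs = a i" "last xs = x" "successively (RR E) xs" "set xs \<subseteq> V - {c}"
    unfolding K_def by blast
  show "y \<in> K i" unfolding K_def
    apply (intro CollectI exI[of _ "xs @ [y]"])
    using xs \<open>E x y\<close> \<open>y \<noteq> c\<close> inV2[OF \<open>E x y\<close>] by (auto simp: successively_append_iff RR_def)
qed

lemma cK: "c \<notin> K i"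
proof
  assume "c \<in> K i"
  then obtain xs where xs: "xs \<noteq> []" "last xs = c" "set xs \<subseteq> V - {c}"
    unfolding K_def by blast
  then have "last xs \<in> set xs" by (intro last_in_set) simp
  then show False using xs by auto
qed

lemma KV: "x \<in> K i \<Longrightarrow> x \<in> V"
proof -
  assume "x \<in> K i"
  then obtain xs where xs: "xs \<noteq> []" "last xs = x" "set xs \<subseteq> V - {c}"
    unfolding K_def by blast
  then have "last xs \<in> set xs" by (intro last_in_set) simp
  then show ?thesis using xs by auto
qed

lemma K_disj: "i < 3 \<Longrightarrow> j < 3 \<Longrightarrow> i \<noteq> j \<Longrightarrow> x \<in> K i \<Longrightarrow> x \<in> K j \<Longrightarrow> False"
proof -
  assume ij: "i < 3" "j < 3" "i \<noteq> j" and "x \<in> K i" "x \<in> K j"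
  then obtain xs where xs: "xs \<noteq> []" "hd xs = a i" "last xs = x" "successively (RR E) xs" "set xs \<subseteq> V - {c}"
    unfolding K_def by blast
  obtain ys where ys: "ys \<noteq> []" "hd ys = a j" "last ys = x" "successively (RR E) ys" "set ys \<subseteq> V - {c}"
    using \<open>x \<in> K j\<close> unfolding K_def by blast
  have sr: "successively (RR E) (rev ys)" unfolding successively_rev
    by (rule successively_mono[OF ys(4)]) (auto simp: RR_def sym)
  have "successively (RR E) (xs @ rev ys)"
    using xs ys sr by (auto simp: successively_append_iff RR_def hd_rev)
  moreover have "hd (xs @ rev ys) = a i" using xs by simp
  moreover have "last (xs @ rev ys) = a j" using ys by (simp add: last_rev)
  moreover have "set (xs @ rev ys) \<subseteq> V - {c}" using xs ys by auto
  moreover have "a i \<noteq> a j" using ainj ij by blast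
  ultimately show False using no_detour[OF T ca[OF ij(1)] ca[OF ij(2)], of "xs @ rev ys"] xs by simp
qed

lemma K_cnb: "i < 3 \<Longrightarrow> x \<in> K i \<Longrightarrow> E c x \<Longrightarrow> x = a i"
proof (rule ccontr)
  assume i: "i < 3" and "x \<in> K i" "E c x" "x \<noteq> a i"
  then obtain xs where xs: "xs \<noteq> []" "hd xs = a i" "last xs = x" "successively (RR E) xs" "set xs \<subseteq> V - {c}"
    unfolding K_def by blast
  show False using no_detour[OF T ca[OF i] \<open>E c x\<close> _ xs] \<open>x \<noteq> a i\<close> by simp
qed

lemma inK_ne: "i < 3 \<Longrightarrow> j < 3 \<Longrightarrow> j \<noteq> i \<Longrightarrow> x \<in> K i \<Longrightarrow> x \<noteq> a j \<and> x \<noteq> b j"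
proof -
  assume h: "i < 3" "j < 3" "j \<noteq> i" "x \<in> K i"
  then have "x \<notin> K j" using K_disj[of i j x] by blast
  then show ?thesis using aK[OF h(2)] bK[OF h(2)] by auto
qed

lemma notK_ne: "\<forall>i<3. x \<notin> K i \<Longrightarrow> j < 3 \<Longrightarrow> x \<noteq> a j \<and> x \<noteq> b j"
proof -
  assume h: "\<forall>i<3. x \<notin> K i" "j < 3"
  then have "x \<notin> K j" by blast
  then show ?thesis using aK[OF h(2)] bK[OF h(2)] by auto
qed

lemma K_step: "x \<in> K i \<Longrightarrow> y \<in> cnbhd V E x \<Longrightarrow> y = c \<or> y \<in> K i"
  unfolding cnbhd_def using K_closed by auto

lemma notK_step: "\<forall>i<3. x \<notin> K i \<Longrightarrow> y \<in> cnbhd V E x \<Longrightarrow> m < 3 \<Longrightarrow> y \<in> K m \<Longrightarrow> x = c \<and> y = a m"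
proof -
  assume x: "\<forall>i<3. x \<notin> K i" and y: "y \<in> cnbhd V E x" and m: "m < 3" "y \<in> K m"
  have "y \<noteq> x" using x m by auto
  then have "E x y" using y unfolding cnbhd_def by auto
  have "x = c"
  proof (rule ccontr)
    assume "x \<noteq> c"
    then have "x \<in> K m" using K_closed[OF m(2) sym[OF \<open>E x y\<close>]] by simp
    then show False using x m by auto
  qed
  then show ?thesis using K_cnb[OF m(1) m(2)] \<open>E x y\<close> by simp
qed

definition full :: "'a set \<Rightarrow> nat \<Rightarrow> bool" where
  "full S i \<longleftrightarrow> a i \<in> S \<and> b i \<in> S"

definition Inv :: "'a \<Rightarrow> 'a set \<Rightarrow> bool" where
  "Inv x S \<longleftrightarrow>
     ((\<forall>i<3. x \<notin> K i) \<and> (\<exists>i<3. \<exists>j<3. i \<noteq> j \<and> full S i \<and> full S j))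
   \<or> (\<exists>i<3. x \<in> K i \<and> (\<forall>j<3. j \<noteq> i \<longrightarrow> full S j))
   \<or> (\<exists>i<3. \<exists>j<3. i \<noteq> j \<and> x = a i \<and> b i \<in> S \<and> c \<in> S \<and> full S j)
   \<or> (\<exists>i<3. \<exists>j<3. i \<noteq> j \<and> x \<in> K i \<and> c \<in> S \<and> full S j \<and> (\<forall>k<3. k \<noteq> i \<longrightarrow> a k \<in> S))"

lemma Inv_ne: "Inv x S \<Longrightarrow> S \<noteq> {}"
proof -
  assume "Inv x S"
  then consider (A) "\<exists>i<3. \<exists>j<3. i \<noteq> j \<and> full S i \<and> full S j"
    | (B) "\<exists>i<3. x \<in> K i \<and> (\<forall>j<3. j \<noteq> i \<longrightarrow> full S j)"
    | (C) "c \<in> S"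
    unfolding Inv_def by blast
  then show ?thesis
  proof cases
    case A then show ?thesis unfolding full_def by auto
  next
    case B
    then obtain i where i: "i < 3" "\<forall>j<3. j \<noteq> i \<longrightarrow> full S j" by blast
    obtain j k where "j < 3" "j \<noteq> i" using two_others[OF i(1)] by blast
    then show ?thesis using i unfolding full_def by auto
  next
    case C then show ?thesis by auto
  qed
qed

lemma keep_full: "full S j \<Longrightarrow> j < 3 \<Longrightarrow> a j \<noteq> y \<Longrightarrow> b j \<noteq> y \<Longrightarrow> full (Nb V E (S - {y}) - {y}) j"
  unfolding full_def using Nb_keep aV bV by metis

lemma Inv_step: "Inv x S \<Longrightarrow> y \<in> cnbhd V E x \<Longrightarrow> Inv y (Nb V E (S - {y}) - {y})"
proof -
  assume I: "Inv x S" and y: "y \<in> cnbhd V E x"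
  define S' where "S' = Nb V E (S - {y}) - {y}"
  have yV: "y \<in> V" using y unfolding cnbhd_def by auto
  consider (C1) "(\<forall>i<3. x \<notin> K i)" "\<exists>i<3. \<exists>j<3. i \<noteq> j \<and> full S i \<and> full S j"
   | (C2) "\<exists>i<3. x \<in> K i \<and> (\<forall>j<3. j \<noteq> i \<longrightarrow> full S j)"
   | (C3) "\<exists>i<3. \<exists>j<3. i \<noteq> j \<and> x = a i \<and> b i \<in> S \<and> c \<in> S \<and> full S j"
   | (C4) "\<exists>i<3. \<exists>j<3. i \<noteq> j \<and> x \<in> K i \<and> c \<in> S \<and> full S j \<and> (\<forall>k<3. k \<noteq> i \<longrightarrow> a k \<in> S)"
    using I unfolding Inv_def by blast
  then show "Inv y S'"
  proof cases
    case C1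
    then obtain i j where ij: "i < 3" "j < 3" "i \<noteq> j" "full S i" "full S j" by blast
    show ?thesis
    proof (cases "\<forall>m<3. y \<notin> K m")
      case True
      then have "full S' i" "full S' j" unfolding S'_def using keep_full ij notK_ne[OF True] by metis+
      then show ?thesis unfolding Inv_def using True ij by blast
    next
      case False
      then obtain m where m: "m < 3" "y \<in> K m" by blast
      then have xc: "x = c" and ya: "y = a m" using notK_step[OF C1(1) y] by auto
      show ?thesis
      proof (cases "m = i \<or> m = j")
        case True
        then obtain p q where pq: "p < 3" "q < 3" "p \<noteq> q" "full S p" "full S q" "m = p"
          using ij by blast
        have "b p \<in> S'" unfolding S'_def using pq a_ne_b[of p] ya bV[of p] Nb_keep[of "b p" S y V E]
          unfolding full_def by metis
        moreover have "c \<in> S'" unfolding S'_def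
          using Nb_nb[of "a q" S y E c V] pq ya ainj[of p q] sym[OF ca[of q]] cV a_ne_c[of p]
          unfolding full_def by metis
        moreover have "full S' q" unfolding S'_def
          using keep_full[OF pq(5) pq(2)] inK_ne[of p q y] pq m ya by metis
        ultimately show ?thesis unfolding Inv_def using pq ya by blast
      next
        case False
        have "\<forall>k<3. k \<noteq> m \<longrightarrow> full S' k"
        proof (intro allI impI)
          fix k assume "k < 3" "k \<noteq> m"
          then have "k = i \<or> k = j" using third_idx[OF ij(1,2) m(1) ij(3)] False by blast
          then have "full S k" using ij by blast
          then show "full S' k" unfolding S'_def using keep_full inK_ne[OF m(1) \<open>k < 3\<close> _ m(2)] \<open>k < 3\<close> \<open>k \<noteq> m\<close> by metis
        qed
        then show ?thesis unfolding Inv_def using m by blast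
      qed
    qed
  next
    case C2
    then obtain i where i: "i < 3" "x \<in> K i" "\<forall>j<3. j \<noteq> i \<longrightarrow> full S j" by blast
    from K_step[OF i(2) y] show ?thesis
    proof
      assume yc: "y = c"
      obtain j k where jk: "j < 3" "k < 3" "j \<noteq> k" "j \<noteq> i" "k \<noteq> i" using two_others[OF i(1)] by blast
      have "full S' j" "full S' k" unfolding S'_def using keep_full i(3) jk a_ne_c bc yc by metis+
      moreover have "\<forall>m<3. y \<notin> K m" using yc cK by simp
      ultimately show ?thesis unfolding Inv_def using jk by blast
    next
      assume yK: "y \<in> K i"
      have "\<forall>j<3. j \<noteq> i \<longrightarrow> full S' j"
        unfolding S'_def using keep_full i(3) inK_ne[OF i(1) _ _ yK] by metis
      then show ?thesis unfolding Inv_def using i(1) yK by blast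
    qed
  next
    case C3
    then obtain i j where ij: "i < 3" "j < 3" "i \<noteq> j" "x = a i" "b i \<in> S" "c \<in> S" "full S j" by blast
    have xK: "x \<in> K i" using aK ij by simp
    from K_step[OF xK y] show ?thesis
    proof
      assume yc: "y = c"
      have "a i \<in> S'" unfolding S'_def
        using Nb_nb[of "b i" S y E "a i" V] ij bc sym[OF ab[of i]] aV a_ne_c yc by metis
      moreover have "b i \<in> S'" unfolding S'_def using Nb_keep[of "b i" S y V E] ij bc bV yc by metis
      moreover have "full S' j" unfolding S'_def using keep_full ij a_ne_c bc yc by metis
      moreover have "\<forall>m<3. y \<notin> K m" using yc cK by simp
      ultimately show ?thesis unfolding Inv_def full_def using ij by blast
    next
      assume yK: "y \<in> K i"
      have cS': "c \<in> S'" unfolding S'_def using Nb_keep[of c S y V E] ij(6) cV yK cK by metis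
      have fj: "full S' j" unfolding S'_def using keep_full ij inK_ne[OF ij(1) ij(2) _ yK] by metis
      show ?thesis
      proof (cases "y = a i")
        case True
        have "b i \<in> S'" unfolding S'_def using Nb_keep[of "b i" S y V E] ij bV a_ne_b True by metis
        then show ?thesis unfolding Inv_def using ij True cS' fj by blast
      next
        case False
        have "\<forall>k<3. k \<noteq> i \<longrightarrow> a k \<in> S'"
        proof (intro allI impI)
          fix k assume "k < 3" "k \<noteq> i"
          then have "a k \<noteq> y" using inK_ne[OF ij(1) _ _ yK] by metis
          then show "a k \<in> S'" unfolding S'_def
            using Nb_nb[of c S y E "a k" V] ij(6) ca[OF \<open>k < 3\<close>] aV[OF \<open>k < 3\<close>] yK cK by metis
        qed
        then show ?thesis unfolding Inv_def using ij yK cS' fj by blast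
      qed
    qed
  next
    case C4
    then obtain i j where ij: "i < 3" "j < 3" "i \<noteq> j" "x \<in> K i" "c \<in> S" "full S j"
      and ak: "\<forall>k<3. k \<noteq> i \<longrightarrow> a k \<in> S" by blast
    from K_step[OF ij(4) y] show ?thesis
    proof
      assume yc: "y = c"
      have fk: "full S' k" if "k < 3" "k \<noteq> i" for k
      proof -
        have "a k \<in> S'" unfolding S'_def using Nb_keep[of "a k" S y V E] ak that aV a_ne_c yc by metis
        moreover have "b k \<in> S'" unfolding S'_def
          using Nb_nb[of "a k" S y E "b k" V] ak that ab bV a_ne_c bc yc by metis
        ultimately show ?thesis unfolding full_def by simp
      qed
      obtain p q where pq: "p < 3" "q < 3" "p \<noteq> q" "p \<noteq> i" "q \<noteq> i" using two_others[OF ij(1)] by blast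
      have "\<forall>m<3. y \<notin> K m" using yc cK by simp
      moreover have "full S' p" "full S' q" using fk pq by auto
      ultimately show ?thesis unfolding Inv_def using pq by blast
    next
      assume yK: "y \<in> K i"
      have fk: "full S' k" if "k < 3" "k \<noteq> i" for k
      proof -
        have ne: "a k \<noteq> y" "b k \<noteq> y" using inK_ne[OF ij(1) that(1) that(2) yK] by auto
        have "a k \<in> S'" unfolding S'_def using Nb_keep[of "a k" S y V E] ak that aV ne by metis
        moreover have "b k \<in> S'" unfolding S'_def
          using Nb_nb[of "a k" S y E "b k" V] ak that ab bV ne by metis
        ultimately show ?thesis unfolding full_def by simp
      qed
      then show ?thesis unfolding Inv_def using ij(1) yK by blast
    qed
  qed
qed

lemma Inv_init: "c0 \<in> V \<Longrightarrow> Inv c0 (V - {c0})"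
proof -
  assume c0: "c0 \<in> V"
  show ?thesis
  proof (cases "\<forall>i<3. c0 \<notin> K i")
    case True
    have "c0 \<noteq> a 0 \<and> c0 \<noteq> b 0" "c0 \<noteq> a 1 \<and> c0 \<noteq> b 1" using notK_ne[OF True] by auto
    then have "full (V - {c0}) 0" "full (V - {c0}) 1" unfolding full_def using aV[of 0] bV[of 0] aV[of 1] bV[of 1] by auto
    moreover have "(0::nat) < 3" "(1::nat) < 3" "(0::nat) \<noteq> 1" by simp_all
    ultimately have "\<exists>i<3. \<exists>j<3. i \<noteq> j \<and> full (V - {c0}) i \<and> full (V - {c0}) j" by blast
    then show ?thesis unfolding Inv_def using True by blast
  next
    case False
    then obtain i where i: "i < 3" "c0 \<in> K i" by blast
    have "\<forall>j<3. j \<noteq> i \<longrightarrow> full (V - {c0}) j" unfolding full_def using inK_ne[OF i(1) _ _ i(2)] aV bV by auto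
    then show ?thesis unfolding Inv_def using i by blast
  qed
qed

lemma robbers_unbounded: "\<exists>M. \<forall>m\<ge>M. \<not> cop_captures_by V E m N"
  by (rule robbers_win_captures[of Inv V E, OF Inv_ne Inv_step Inv_init tree_simple(1)[OF T]])

end


lemma lt3: "(i::nat) < 3 \<Longrightarrow> i = 0 \<or> i = 1 \<or> i = 2" by arith

lemma noncat_unbounded:
  assumes T: "is_tree V E" and nc: "\<not> caterpillar V E"
  shows "\<exists>M. \<forall>m\<ge>M. \<not> cop_captures_by V E m N"
proof -
  have np: "\<not> induced_is_path (V - leaves V E) E" using nc T unfolding caterpillar_def by simp
  obtain c a0 a1 a2 where h: "c \<in> V - leaves V E" "a0 \<in> V - leaves V E" "a1 \<in> V - leaves V E"
     "a2 \<in> V - leaves V E" "a0 \<noteq> a1" "a0 \<noteq> a2" "a1 \<noteq> a2" "E c a0" "E c a1" "E c a2"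
    using deg3[OF T np] by blast
  have sym: "\<And>u v. E u v \<Longrightarrow> E v u" using tree_simple(4)[OF T] .
  obtain b0 where b0: "E a0 b0" "b0 \<noteq> c" using nonleaf_other[of a0 V E c] h sym by blast
  obtain b1 where b1: "E a1 b1" "b1 \<noteq> c" using nonleaf_other[of a1 V E c] h sym by blast
  obtain b2 where b2: "E a2 b2" "b2 \<noteq> c" using nonleaf_other[of a2 V E c] h sym by blast
  define a where "a = (\<lambda>i::nat. if i = 0 then a0 else if i = 1 then a1 else a2)"
  define b where "b = (\<lambda>i::nat. if i = 0 then b0 else if i = 1 then b1 else b2)"
  interpret spider V E c a b
  proof
    show "is_tree V E" by (rule T)
    fix i :: nat assume "i < 3"
    then have "i = 0 \<or> i = 1 \<or> i = 2" by (rule lt3)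
    then show "E c (a i)" "E (a i) (b i)" "b i \<noteq> c" unfolding a_def b_def using h b0 b1 b2 by auto
  next
    fix i j :: nat assume "i < 3" "j < 3" "a i = a j"
    then have "i = 0 \<or> i = 1 \<or> i = 2" "j = 0 \<or> j = 1 \<or> j = 2" using lt3 by auto
    then show "i = j" using \<open>a i = a j\<close> h unfolding a_def by auto
  qed
  show ?thesis by (rule robbers_unbounded)
qed

lemma cc_suc: "cop_captures_by V E (Suc m) n \<Longrightarrow> cop_captures_by V E m n"
proof -
  assume "cop_captures_by V E (Suc m) n"
  then obtain c0 where c0: "c0 \<in> V" and H: "\<forall>rs0. length rs0 = Suc m \<and> set rs0 \<subseteq> V \<longrightarrow>
        cop_wins_within V E n c0 (filter (\<lambda>r. r \<noteq> c0) rs0)" unfolding cop_captures_by_def by blast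
  show ?thesis unfolding cop_captures_by_def
  proof (intro bexI[OF _ c0] allI impI)
    fix rs0 assume "length rs0 = m \<and> set rs0 \<subseteq> V"
    then have "length (rs0 @ [c0]) = Suc m \<and> set (rs0 @ [c0]) \<subseteq> V" using c0 by simp
    then show "cop_wins_within V E n c0 (filter (\<lambda>r. r \<noteq> c0) rs0)" using H by fastforce
  qed
qed

lemma mono_bounded_conv:
  fixes f :: "nat \<Rightarrow> nat"
  assumes mono: "\<And>m. f m \<le> f (Suc m)" and bd: "\<And>m. f m \<le> B"
  shows "\<exists>L::nat. f \<longlonglongrightarrow> L"
proof -
  have "range f \<subseteq> {..B}" using bd by auto
  then have fin: "finite (range f)" using finite_subset by blast
  define L where "L = Max (range f)"
  have "L \<in> range f" unfolding L_def using fin by (intro Max_in) auto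
  then obtain m0 where m0: "f m0 = L" by auto
  have "\<forall>m\<ge>m0. f m = L"
  proof (intro allI impI)
    fix m assume "m0 \<le> m"
    then have "f m0 \<le> f m" using lift_Suc_mono_le[of f, OF mono] by blast
    moreover have "f m \<le> L" unfolding L_def using fin by (intro Max_ge) auto
    ultimately show "f m = L" using m0 by simp
  qed
  then have "eventually (\<lambda>m. f m = L) sequentially" unfolding eventually_sequentially by blast
  then show ?thesis using tendsto_eventually by blast
qed

locale catspine =
  fixes V :: "'a set" and E :: "'a \<Rightarrow> 'a \<Rightarrow> bool" and xs :: "'a list"
  assumes T: "is_tree V E"
  and dxs: "distinct xs"
  and setxs: "set xs = V - leaves V E"
  and edges: "\<And>u v. u \<in> V - leaves V E \<Longrightarrow> v \<in> V - leaves V E \<Longrightarrow> E u v \<longleftrightarrow>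
           (\<exists>i. Suc i < length xs \<and> ((xs ! i = u \<and> xs ! Suc i = v) \<or> (xs ! i = v \<and> xs ! Suc i = u)))"
  and ne: "xs \<noteq> []"
begin

abbreviation "k \<equiv> length xs"

lemma sym: "E u v \<Longrightarrow> E v u" using tree_simple(4)[OF T] .
lemma inV1: "E u v \<Longrightarrow> u \<in> V" using tree_simple(2)[OF T] .
lemma inV2: "E u v \<Longrightarrow> v \<in> V" using tree_simple(3)[OF T] .

lemma spV: "i < k \<Longrightarrow> xs ! i \<in> V" using setxs nth_mem by blast
lemma spNL: "i < k \<Longrightarrow> xs ! i \<notin> leaves V E" using setxs nth_mem by blast

lemma leafpar: "v \<in> leaves V E \<Longrightarrow> \<exists>i<k. E v (xs ! i)"
proof -
  assume v: "v \<in> leaves V E"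
  then obtain u where u: "u \<in> V" "E v u" using leaf_has_nb[OF v] by blast
  have "u \<notin> leaves V E"
  proof
    assume "u \<in> leaves V E"
    then have "V \<subseteq> {u, v}" using two_leaves[OF T v] u by blast
    then have "V - leaves V E = {}" using v \<open>u \<in> leaves V E\<close> by auto
    then have "set xs = {}" using setxs by simp
    then show False using ne by simp
  qed
  then have "u \<in> set xs" using setxs u by auto
  then show ?thesis using u by (auto simp: in_set_conv_nth)
qed

lemma adj: "i < k \<Longrightarrow> j < k \<Longrightarrow> E (xs ! i) (xs ! j) \<Longrightarrow> j = Suc i \<or> i = Suc j"
proof -
  assume ij: "i < k" "j < k" "E (xs ! i) (xs ! j)"
  then obtain l where l: "Suc l < k" "(xs ! l = xs ! i \<and> xs ! Suc l = xs ! j) \<or> (xs ! l = xs ! j \<and> xs ! Suc l = xs ! i)"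
    using edges[of "xs ! i" "xs ! j"] spV spNL by blast
  then show ?thesis using dxs ij by (auto simp: nth_eq_iff_index_eq)
qed

lemma consec: "Suc i < k \<Longrightarrow> E (xs ! i) (xs ! Suc i)"
  using edges[of "xs ! i" "xs ! Suc i"] spV spNL by auto

definition R :: "nat \<Rightarrow> 'a set" where
  "R j = {v \<in> V. \<exists>i. j < i \<and> i < k \<and> (v = xs ! i \<or> (v \<in> leaves V E \<and> E v (xs ! i)))}"

definition L :: "nat \<Rightarrow> 'a set" where
  "L j = {v \<in> leaves V E. E v (xs ! j)}"

lemma closure: "j < k \<Longrightarrow> L' \<subseteq> L j \<Longrightarrow> Nb V E (R j \<union> L') \<subseteq> R j \<union> L' \<union> {xs ! j}"
proof
  fix y assume j: "j < k" and L': "L' \<subseteq> L j" and "y \<in> Nb V E (R j \<union> L')"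
  then obtain x where x: "x \<in> R j \<union> L'" "y \<in> cnbhd V E x" unfolding Nb_def by blast
  have yV: "y \<in> V" using x unfolding cnbhd_def by auto
  show "y \<in> R j \<union> L' \<union> {xs ! j}"
  proof (cases "y = x")
    case True then show ?thesis using x by auto
  next
    case False
    then have e: "E x y" using x unfolding cnbhd_def by auto
    show ?thesis
    proof (cases "x \<in> L'")
      case True
      then have "x \<in> leaves V E" "E x (xs ! j)" using L' unfolding L_def by auto
      then have "y = xs ! j" using leaf_unique[of x V E y "xs ! j"] e yV spV[OF j] by blast
      then show ?thesis by simp
    next
      case False
      then have "x \<in> R j" using x by simp
      then obtain i where i: "j < i" "i < k" "x = xs ! i \<or> (x \<in> leaves V E \<and> E x (xs ! i))"
        unfolding R_def by blast
      show ?thesis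
      proof (cases "x = xs ! i")
        case xi: True
        show ?thesis
        proof (cases "y \<in> leaves V E")
          case True
          then have "y \<in> R j" unfolding R_def using yV i sym[OF e] xi by auto
          then show ?thesis by simp
        next
          case False
          then have "y \<in> set xs" using setxs yV by auto
          then obtain i' where i': "i' < k" "y = xs ! i'" by (auto simp: in_set_conv_nth)
          then have "i' = Suc i \<or> i = Suc i'" using adj[OF i(2) i'(1)] e xi by simp
          then show ?thesis
          proof
            assume "i' = Suc i"
            then have "j < i'" using i by simp
            then have "y \<in> R j" unfolding R_def using yV i' by blast
            then show ?thesis by simp
          next
            assume ii: "i = Suc i'"
            show ?thesis
            proof (cases "j < i'")
              case True
              then have "y \<in> R j" unfolding R_def using yV i' by auto
              then show ?thesis by simp
            next
              case False
              then have "i' = j" using ii i by simp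
              then show ?thesis using i' by simp
            qed
          qed
        qed
      next
        case False
        then have "x \<in> leaves V E" "E x (xs ! i)" using i by auto
        then have "y = xs ! i" using leaf_unique[of x V E y "xs ! i"] e yV spV[OF i(2)] by blast
        then have "y \<in> R j" unfolding R_def using spV[OF i(2)] i by auto
        then show ?thesis by simp
      qed
    qed
  qed
qed

lemma finL: "finite (L j)"
  using tree_simple(1)[OF T] unfolding L_def leaves_def by auto

lemma cardL: "card (L j) \<le> card V"
  using tree_simple(1)[OF T] unfolding L_def leaves_def by (intro card_mono) auto

lemma inner:
  assumes j: "j < k" and base: "clean V E n (xs ! j) (R j)"
  shows "finite L' \<Longrightarrow> L' \<subseteq> L j \<Longrightarrow> clean V E (2 * card L' + n) (xs ! j) (R j \<union> L')"
proof (induction L' rule: finite_induct)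
  case empty then show ?case using base by simp
next
  case (insert l F)
  have FL: "F \<subseteq> L j" using insert by auto
  have l: "l \<in> leaves V E" "E l (xs ! j)" using insert unfolding L_def by auto
  have lV: "l \<in> V" using inV1[OF l(2)] .
  have IH: "clean V E (2 * card F + n) (xs ! j) (R j \<union> F)" using insert FL by blast
  have step2: "clean V E (Suc (2 * card F + n)) l (R j \<union> F \<union> {xs ! j})"
  proof (rule clean_stepI[OF _ _ IH])
    show "xs ! j \<in> cnbhd V E l" unfolding cnbhd_def using spV[OF j] l by auto
    have "Nb V E ((R j \<union> F \<union> {xs ! j}) - {xs ! j}) \<subseteq> Nb V E (R j \<union> F)" by (rule Nb_mono) auto
    then show "Nb V E ((R j \<union> F \<union> {xs ! j}) - {xs ! j}) - {xs ! j} \<subseteq> R j \<union> F"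
      using closure[OF j FL] by auto
  qed
  have "clean V E (Suc (Suc (2 * card F + n))) (xs ! j) (R j \<union> insert l F)"
  proof (rule clean_stepI[OF _ _ step2])
    show "l \<in> cnbhd V E (xs ! j)" unfolding cnbhd_def using lV sym[OF l(2)] by auto
    have "Nb V E ((R j \<union> insert l F) - {l}) \<subseteq> Nb V E (R j \<union> F)" by (rule Nb_mono) auto
    then show "Nb V E ((R j \<union> insert l F) - {l}) - {l} \<subseteq> R j \<union> F \<union> {xs ! j}"
      using closure[OF j FL] by auto
  qed
  moreover have "2 * card (insert l F) + n = Suc (Suc (2 * card F + n))" using insert by simp
  ultimately show ?case by simp
qed

lemma outer: "\<forall>j. j < k \<longrightarrow> k - 1 - j = d \<longrightarrow> clean V E (d * (2 * card V + 1)) (xs ! j) (R j)"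
proof (induction d)
  case 0
  show ?case
  proof (intro allI impI)
    fix j assume "j < k" "k - 1 - j = 0"
    then have "R j = {}" unfolding R_def by auto
    then show "clean V E (0 * (2 * card V + 1)) (xs ! j) (R j)" by (simp add: clean_empty)
  qed
next
  case (Suc d)
  show ?case
  proof (intro allI impI)
    fix j assume j: "j < k" "k - 1 - j = Suc d"
    then have j1: "Suc j < k" "k - 1 - Suc j = d" by auto
    have c1: "clean V E (d * (2 * card V + 1)) (xs ! Suc j) (R (Suc j))" using Suc.IH j1 by blast
    have c2: "clean V E (2 * card (L (Suc j)) + d * (2 * card V + 1)) (xs ! Suc j) (R (Suc j) \<union> L (Suc j))"
      by (rule inner[OF j1(1) c1 finL]) simp
    have c3: "clean V E (d * (2 * card V + 1) + 2 * card V) (xs ! Suc j) (R (Suc j) \<union> L (Suc j))"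
      by (rule clean_mono_n[OF c2]) (use cardL[of "Suc j"] in simp)
    have "clean V E (Suc (d * (2 * card V + 1) + 2 * card V)) (xs ! j) (R j)"
    proof (rule clean_stepI[OF _ _ c3])
      show "xs ! Suc j \<in> cnbhd V E (xs ! j)" unfolding cnbhd_def using spV[OF j1(1)] consec[OF j1(1)] by auto
      have sub: "R j - {xs ! Suc j} \<subseteq> R (Suc j) \<union> L (Suc j)"
      proof
        fix v assume v: "v \<in> R j - {xs ! Suc j}"
        then obtain i where i: "j < i" "i < k" "v = xs ! i \<or> (v \<in> leaves V E \<and> E v (xs ! i))" "v \<in> V"
          unfolding R_def by blast
        show "v \<in> R (Suc j) \<union> L (Suc j)"
        proof (cases "i = Suc j")
          case True
          then show ?thesis using v i unfolding L_def by auto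
        next
          case False
          then have "Suc j < i" using i by simp
          then show ?thesis using i unfolding R_def by auto
        qed
      qed
      have "Nb V E (R j - {xs ! Suc j}) \<subseteq> Nb V E (R (Suc j) \<union> L (Suc j))" by (rule Nb_mono[OF sub])
      then show "Nb V E (R j - {xs ! Suc j}) - {xs ! Suc j} \<subseteq> R (Suc j) \<union> L (Suc j)"
        using closure[OF j1(1), of "L (Suc j)"] by auto
    qed
    moreover have "Suc (d * (2 * card V + 1) + 2 * card V) = Suc d * (2 * card V + 1)" by simp
    ultimately show "clean V E (Suc d * (2 * card V + 1)) (xs ! j) (R j)" by metis
  qed
qed

lemma start_cover: "V - {xs ! 0} \<subseteq> R 0 \<union> L 0"
proof
  fix v assume v: "v \<in> V - {xs ! 0}"
  show "v \<in> R 0 \<union> L 0"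
  proof (cases "v \<in> leaves V E")
    case True
    then obtain i where i: "i < k" "E v (xs ! i)" using leafpar by blast
    show ?thesis
    proof (cases "i = 0")
      case True then show ?thesis using i \<open>v \<in> leaves V E\<close> unfolding L_def by auto
    next
      case False then show ?thesis using i v \<open>v \<in> leaves V E\<close> unfolding R_def by auto
    qed
  next
    case False
    then have "v \<in> set xs" using setxs v by auto
    then obtain i where i: "i < k" "v = xs ! i" by (auto simp: in_set_conv_nth)
    then have "0 < i" using v by (cases i) auto
    then show ?thesis using i v unfolding R_def by blast
  qed
qed

lemma captures: "cop_captures_by V E m (2 * card V + (k - 1) * (2 * card V + 1))"
proof -
  have k0: "0 < k" using ne by simp
  have c1: "clean V E ((k - 1) * (2 * card V + 1)) (xs ! 0) (R 0)" using outer k0 by simp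
  have c2: "clean V E (2 * card (L 0) + (k - 1) * (2 * card V + 1)) (xs ! 0) (R 0 \<union> L 0)"
    by (rule inner[OF k0 c1 finL]) simp
  have c3: "clean V E (2 * card V + (k - 1) * (2 * card V + 1)) (xs ! 0) (R 0 \<union> L 0)"
    by (rule clean_mono_n[OF c2]) (use cardL[of 0] in simp)
  show ?thesis unfolding cop_captures_by_def
  proof (intro bexI[OF _ spV[OF k0]] allI impI)
    fix rs0 :: "'a list" assume "length rs0 = m \<and> set rs0 \<subseteq> V"
    then have "set (filter (\<lambda>r. r \<noteq> xs ! 0) rs0) \<subseteq> R 0 \<union> L 0" using start_cover by auto
    then show "cop_wins_within V E (2 * card V + (k - 1) * (2 * card V + 1)) (xs ! 0) (filter (\<lambda>r. r \<noteq> xs ! 0) rs0)"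
      by (rule clean_wins[OF c3])
  qed
qed

end

lemma cat_bounded:
  assumes T: "is_tree V E" and cat: "caterpillar V E"
  shows "\<exists>B. \<forall>m. cop_captures_by V E m B"
proof (cases "V - leaves V E = {}")
  case True
  obtain u where u: "u \<in> V" using tree_simple(7)[OF T] by blast
  then have ul: "u \<in> leaves V E" using True by auto
  then obtain v where v: "v \<in> V" "E u v" using leaf_has_nb[OF ul] by blast
  then have vl: "v \<in> leaves V E" using True by auto
  have "V \<subseteq> {v, u}" using two_leaves[OF T ul vl v(2)] .
  have cl: "clean V E (Suc 0) u {v}"
  proof (rule clean_stepI[of v])
    show "v \<in> cnbhd V E u" unfolding cnbhd_def using v by auto
    show "Nb V E ({v} - {v}) - {v} \<subseteq> {}" unfolding Nb_def by auto
    show "clean V E 0 v {}" by (rule clean_empty)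
  qed
  have "cop_captures_by V E m (Suc 0)" for m
    unfolding cop_captures_by_def
  proof (intro bexI[OF _ u] allI impI)
    fix rs0 :: "'a list" assume "length rs0 = m \<and> set rs0 \<subseteq> V"
    then have "set (filter (\<lambda>r. r \<noteq> u) rs0) \<subseteq> {v}" using \<open>V \<subseteq> {v, u}\<close> by auto
    then show "cop_wins_within V E (Suc 0) u (filter (\<lambda>r. r \<noteq> u) rs0)" by (rule clean_wins[OF cl])
  qed
  then show ?thesis by blast
next
  case False
  then obtain xs where xs: "distinct xs" "set xs = V - leaves V E"
    "\<forall>u\<in>V - leaves V E. \<forall>v\<in>V - leaves V E. E u v \<longleftrightarrow>
           (\<exists>i. Suc i < length xs \<and> ((xs ! i = u \<and> xs ! Suc i = v) \<or> (xs ! i = v \<and> xs ! Suc i = u)))"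
    using cat unfolding caterpillar_def induced_is_path_def by blast
  have "xs \<noteq> []" using xs(2) False by auto
  then interpret catspine V E xs using T xs by unfold_locales blast+
  show ?thesis using captures by blast
qed

theorem mainTheorem13:
  fixes V :: "'a set" and E :: "'a \<Rightarrow> 'a \<Rightarrow> bool"
  assumes "is_tree V E"
  shows "strong_cop_win V E \<longleftrightarrow> caterpillar V E"
proof
  assume S: "strong_cop_win V E"
  show "caterpillar V E"
  proof (rule ccontr)
    assume nc: "\<not> caterpillar V E"
    from S obtain L :: nat where all: "\<forall>m. \<exists>n. cop_captures_by V E m n" and lim: "(\<lambda>m. capt V E m) \<longlonglongrightarrow> L"
      unfolding strong_cop_win_def by blast
    have "eventually (\<lambda>m. capt V E m \<in> {L}) sequentially"
      by (rule topological_tendstoD[OF lim]) (auto simp: open_discrete)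
    then obtain m0 where m0: "\<And>m. m \<ge> m0 \<Longrightarrow> capt V E m = L" unfolding eventually_sequentially by blast
    obtain M where M: "\<forall>m\<ge>M. \<not> cop_captures_by V E m L" using noncat_unbounded[OF assms nc] by blast
    define m where "m = max m0 M"
    have "cop_captures_by V E m (capt V E m)" unfolding capt_def using all by (meson LeastI_ex)
    then have "cop_captures_by V E m L" using m0[of m] unfolding m_def by simp
    then show False using M unfolding m_def by simp
  qed
next
  assume C: "caterpillar V E"
  obtain B where B: "\<forall>m. cop_captures_by V E m B" using cat_bounded[OF assms C] by blast
  have all: "\<forall>m. \<exists>n. cop_captures_by V E m n" using B by blast
  have mono: "capt V E m \<le> capt V E (Suc m)" for m
  proof -
    have "cop_captures_by V E (Suc m) (capt V E (Suc m))" unfolding capt_def using all by (meson LeastI_ex)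
    then have "cop_captures_by V E m (capt V E (Suc m))" by (rule cc_suc)
    then show ?thesis unfolding capt_def by (rule Least_le)
  qed
  have bd: "capt V E m \<le> B" for m unfolding capt_def using B by (simp add: Least_le)
  obtain L :: nat where "(\<lambda>m. capt V E m) \<longlonglongrightarrow> L" using mono_bounded_conv[of "\<lambda>m. capt V E m" B, OF mono bd] by blast
  then show "strong_cop_win V E" unfolding strong_cop_win_def cop_win_def using all by blast
qed

end
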